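(* Let $d\in\mathbb N\cup\{\infty\}$ and let ${\boldsymbol\gamma}$ be product weights, $\gamma_u=\prod_{j\in u}\gamma_j$. Then $(\Delta_v{\boldsymbol\gamma})_u=\gamma_u\prod_{j\in v}(1-\gamma_j)$ for all $u,v\in\mathcal U_d$ with $u\cap v=\emptyset$, and ${\boldsymbol\gamma}\in\mathcal M_d$ if and only if $0\le\gamma_j\le1$ for all $j\in[d]$. If moreover $d=\infty$ and ${\boldsymbol\gamma}\in\mathcal M_d$, then: (a) ${\boldsymbol\gamma}\in\mathcal N_d$ iff $\lim_{j\to\infty}\gamma_j=0$; (b) for any $C>0$, $T^\downarrow_{d,C}{\boldsymbol\gamma}=\mathbf 0$ iff $\sum_{j=1}^\infty\gamma_j=\infty$; (c) ${\boldsymbol\gamma}\in\mathcal A_d$ iff $\sum_{j=1}^\infty\gamma_j<\infty$ iff ${\boldsymbol\gamma}\in\mathcal P_d$.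
   Context: Write $[d]=\{1,\dots,d\}$ if $d\in\mathbb N$ and $[d]=\mathbb N$ if $d=\infty$; $[s]=\{1,\dots,s\}$ for $s\in\mathbb N$. Let $\mathcal U_d$ be the set of all finite subsets of $[d]$. Weights are families ${\boldsymbol\gamma}=(\gamma_u)_{u\in\mathcal U_d}$ of non-negative reals ($\mathcal W_d$); inequalities and limits of families are componentwise, $\mathbf 0$ is the zero family. Product weights: $\gamma_u=\prod_{j\in u}\gamma_j$ for a non-increasing sequence $(\gamma_j)_{j\in[d]}$ of non-negative reals, with $\gamma_\emptyset=1$. Difference operator: $(\Delta_v{\boldsymbol\gamma})_u=\sum_{w\subseteq v}(-1)^{|w|}\gamma_{u\cup w}$. $\mathcal M_d$: weights with $\Delta_v{\boldsymbol\gamma}\ge\mathbf 0$ for all $v\in\mathcal U_d$. For $d=\infty$ and $C>0$: $(T^\downarrow_{d,C}{\boldsymbol\gamma})_u=C^{-2|u|}\lim_{s\to\infty}(\Delta_{[s]\setminus u}{\boldsymbol\gamma})_u$ for ${\boldsymbol\gamma}\in\mathcal M_d$; with $\max\emptyset=0$, $\mathcal N_d=\{{\boldsymbol\gamma}\in\mathcal M_d:\gamma_u\to0\text{ as }\max u\to\infty\}$; $\mathcal P_d=\{{\boldsymbol\gamma}\in\mathcal M_d:\sum_{v}\gamma_v<\infty\}$; $\mathcal A_d=\{{\boldsymbol\gamma}\in\mathcal M_d:\lim_{r\to\infty}\lim_{s\to\infty}\Delta_{[s]\setminus[r]}{\boldsymbol\gamma}={\boldsymbol\gamma}\}$. *)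

theory Defs
  imports "HOL-Analysis.Analysis" "HOL-Library.Extended_Nat"
begin

definition idx :: "enat \<Rightarrow> nat set" where
  "idx d = {j. 1 \<le> j \<and> enat j \<le> d}"

definition U :: "enat \<Rightarrow> nat set set" where
  "U d = {u. finite u \<and> u \<subseteq> idx d}"

text \<open>Weights are families indexed by U_d; we model them as functions on nat sets,
  only the values on U_d matter.\<close>
definition Wts :: "enat \<Rightarrow> (nat set \<Rightarrow> real) set" where
  "Wts d = {\<gamma>. \<forall>u\<in>U d. 0 \<le> \<gamma> u}"

definition prodw :: "(nat \<Rightarrow> real) \<Rightarrow> nat set \<Rightarrow> real" where
  "prodw g = (\<lambda>u. \<Prod>j\<in>u. g j)"

definition Delta :: "nat set \<Rightarrow> (nat set \<Rightarrow> real) \<Rightarrow> nat set \<Rightarrow> real" where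
  "Delta v \<gamma> u = (\<Sum>w\<in>Pow v. (-1) ^ card w * \<gamma> (u \<union> w))"

definition M :: "enat \<Rightarrow> (nat set \<Rightarrow> real) set" where
  "M d = {\<gamma>. \<gamma> \<in> Wts d \<and> (\<forall>v\<in>U d. \<forall>u\<in>U d. 0 \<le> Delta v \<gamma> u)}"

definition Tdown :: "real \<Rightarrow> (nat set \<Rightarrow> real) \<Rightarrow> nat set \<Rightarrow> real" where
  "Tdown C \<gamma> u = (1 / C ^ (2 * card u)) * lim (\<lambda>s. Delta ({1..s} - u) \<gamma> u)"

definition maxu :: "nat set \<Rightarrow> nat" where
  "maxu u = (if u = {} then 0 else Max u)"

definition N :: "enat \<Rightarrow> (nat set \<Rightarrow> real) set" where
  "N d = {\<gamma>. \<gamma> \<in> M d \<and>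
      (\<forall>e>0. \<exists>K. \<forall>u\<in>U d. K \<le> maxu u \<longrightarrow> \<bar>\<gamma> u\<bar> < e)}"

definition P :: "enat \<Rightarrow> (nat set \<Rightarrow> real) set" where
  "P d = {\<gamma>. \<gamma> \<in> M d \<and> \<gamma> summable_on U d}"

definition A :: "enat \<Rightarrow> (nat set \<Rightarrow> real) set" where
  "A d = {\<gamma>. \<gamma> \<in> M d \<and>
      (\<forall>u\<in>U d. (\<forall>r. convergent (\<lambda>s. Delta ({1..s} - {1..r}) \<gamma> u)) \<and>
         (\<lambda>r. lim (\<lambda>s. Delta ({1..s} - {1..r}) \<gamma> u)) \<longlonglongrightarrow> \<gamma> u)}"

end

theory Submission
  imports Defs
begin


lemma Delta_insert:
  assumes "finite v" "j \<notin> v"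
  shows "Delta (insert j v) \<gamma> u = Delta v \<gamma> u - Delta v \<gamma> (insert j u)"
proof -
  have inj: "inj_on (insert j) (Pow v)" using assms(2) by (auto simp: inj_on_def)
  have disj: "Pow v \<inter> insert j ` Pow v = {}" using assms(2) by auto
  have "Delta (insert j v) \<gamma> u = (\<Sum>w\<in>Pow v. (-1) ^ card w * \<gamma> (u \<union> w)) + (\<Sum>w\<in>insert j ` Pow v. (-1) ^ card w * \<gamma> (u \<union> w))"
    unfolding Delta_def Pow_insert using assms(1) disj by (simp add: sum.union_disjoint)
  also have "(\<Sum>w\<in>insert j ` Pow v. (-1) ^ card w * \<gamma> (u \<union> w)) = (\<Sum>w\<in>Pow v. (-1) ^ card (insert j w) * \<gamma> (u \<union> insert j w))"
    by (simp add: sum.reindex[OF inj])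
  also have "\<dots> = - (\<Sum>w\<in>Pow v. (-1) ^ card w * \<gamma> (insert j u \<union> w))"
  proof -
    have "\<And>w. w \<in> Pow v \<Longrightarrow> (-1::real) ^ card (insert j w) * \<gamma> (u \<union> insert j w) = - ((-1) ^ card w * \<gamma> (insert j u \<union> w))"
    proof -
      fix w assume "w \<in> Pow v"
      hence "finite w" "j \<notin> w" using assms finite_subset by auto
      thus "(-1::real) ^ card (insert j w) * \<gamma> (u \<union> insert j w) = - ((-1) ^ card w * \<gamma> (insert j u \<union> w))"
        by simp
    qed
    thus ?thesis by (simp add: sum_negf[symmetric])
  qed
  finally show ?thesis unfolding Delta_def by simp
qed

lemma Delta_prodw:
  assumes "finite v" "finite u"
  shows "Delta v (prodw g) u = (if u \<inter> v = {} then prodw g u * (\<Prod>j\<in>v. 1 - g j) else 0)"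
  using assms(1) assms(2)
proof (induction v arbitrary: u rule: finite_induct)
  case empty
  then show ?case by (simp add: Delta_def)
next
  case (insert j v)
  have e: "Delta (insert j v) (prodw g) u = Delta v (prodw g) u - Delta v (prodw g) (insert j u)"
    by (rule Delta_insert[OF insert(1,2)])
  show ?case
  proof (cases "j \<in> u")
    case True
    then show ?thesis using e by (simp add: insert_absorb)
  next
    case False
    have pu: "prodw g (insert j u) = g j * prodw g u" using False insert(4) by (simp add: prodw_def)
    have i2: "Delta v (prodw g) (insert j u) = (if insert j u \<inter> v = {} then prodw g (insert j u) * (\<Prod>j\<in>v. 1 - g j) else 0)"
      using insert(3)[of "insert j u"] insert(4) by simp
    show ?thesis unfolding e insert(3)[OF insert(4)] i2 using insert(4) False pu insert(1,2)
      by (auto simp: algebra_simps)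
  qed
qed



lemma weier:
  fixes a :: "nat \<Rightarrow> real"
  assumes "finite S" "\<And>j. j \<in> S \<Longrightarrow> 0 \<le> a j \<and> a j \<le> 1"
  shows "1 - sum a S \<le> (\<Prod>j\<in>S. 1 - a j)"
  using assms
proof (induction S rule: finite_induct)
  case empty then show ?case by simp
next
  case (insert x S)
  have ih: "1 - sum a S \<le> (\<Prod>j\<in>S. 1 - a j)" using insert by auto
  have ax: "0 \<le> a x" "a x \<le> 1" using insert(4) by auto
  have sS: "0 \<le> sum a S" using insert(4) by (auto intro: sum_nonneg)
  have "(1 - a x) * (1 - sum a S) \<le> (1 - a x) * (\<Prod>j\<in>S. 1 - a j)"
    using ih ax by (intro mult_left_mono) auto
  moreover have "1 - sum a (insert x S) \<le> (1 - a x) * (1 - sum a S)"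
    using insert(1,2) ax sS by (simp add: algebra_simps)
  ultimately show ?case using insert(1,2) by simp
qed

lemma prod01:
  fixes a :: "nat \<Rightarrow> real"
  assumes "\<And>j. j \<in> S \<Longrightarrow> 0 \<le> a j \<and> a j \<le> 1"
  shows "0 \<le> (\<Prod>j\<in>S. 1 - a j) \<and> (\<Prod>j\<in>S. 1 - a j) \<le> 1"
  using assms by (auto intro: prod_nonneg prod_le_1)

lemma expb:
  fixes a :: "nat \<Rightarrow> real"
  assumes "finite S" "\<And>j. j \<in> S \<Longrightarrow> 0 \<le> a j \<and> a j \<le> 1"
  shows "(\<Prod>j\<in>S. 1 - a j) \<le> exp (- sum a S)"
proof -
  have "(\<Prod>j\<in>S. 1 - a j) \<le> (\<Prod>j\<in>S. exp (- a j))"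
    using assms(2) by (intro prod_mono) (smt (verit) exp_ge_add_one_self)
  also have "\<dots> = exp (- sum a S)" using assms(1) by (simp add: exp_sum[symmetric] sum_negf)
  finally show ?thesis .
qed

definition Q :: "(nat \<Rightarrow> real) \<Rightarrow> nat set \<Rightarrow> nat \<Rightarrow> real" where
  "Q g u s = (\<Prod>j\<in>{1..s}-u. 1 - g j)"

lemma Q01:
  assumes ab: "\<And>j. 1 \<le> j \<Longrightarrow> 0 \<le> g j \<and> g j \<le> 1"
  shows "0 \<le> Q g u s \<and> Q g u s \<le> 1"
  unfolding Q_def by (rule prod01) (use ab in auto)

lemma Q_dec:
  assumes ab: "\<And>j. 1 \<le> j \<Longrightarrow> 0 \<le> g j \<and> g j \<le> 1"
  shows "decseq (Q g u)"
proof (rule decseq_SucI)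
  fix s
  show "Q g u (Suc s) \<le> Q g u s"
  proof (cases "Suc s \<in> u")
    case True
    then have "{1..Suc s} - u = {1..s} - u" by (auto simp: le_Suc_eq)
    then show ?thesis by (simp add: Q_def)
  next
    case False
    then have e: "{1..Suc s} - u = insert (Suc s) ({1..s} - u)" by (auto simp: le_Suc_eq)
    have "Q g u (Suc s) = (1 - g (Suc s)) * Q g u s" unfolding Q_def e by simp
    moreover have "0 \<le> Q g u s" using Q01[of g, OF ab] by blast
    ultimately show ?thesis using ab[of "Suc s"] by (simp add: mult_left_le_one_le)
  qed
qed

lemma Q_conv:
  assumes ab: "\<And>j. 1 \<le> j \<Longrightarrow> 0 \<le> g j \<and> g j \<le> 1"
  shows "Q g u \<longlonglongrightarrow> lim (Q g u)"
proof -
  have "\<forall>i. 0 \<le> Q g u i" using Q01[of g, OF ab] by blast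
  then obtain L where "Q g u \<longlonglongrightarrow> L"
    using decseq_convergent[OF Q_dec[of g, OF ab]] by blast
  then show ?thesis by (simp add: limI)
qed

lemma sum_shift1: "(\<Sum>j\<in>{1..s}. g j) = (\<Sum>i<s. g (Suc i))"
  by (metis sum_bounds_lt_plus1)

lemma Q_zero:
  assumes ab: "\<And>j. 1 \<le> j \<Longrightarrow> 0 \<le> g j \<and> g j \<le> 1"
    and ns: "\<not> summable (\<lambda>j. g (Suc j))" and fu: "finite u"
  shows "Q g u \<longlonglongrightarrow> 0"
proof (rule LIMSEQ_I)
  fix e :: real assume e: "0 < e"
  define B where "B = real (card u) - ln e"
  have "\<exists>n. B < (\<Sum>k\<le>n. g (Suc k))"
  proof (rule ccontr)
    assume "\<not> ?thesis"
    then have "\<And>n. (\<Sum>k\<le>n. g (Suc k)) \<le> B" by (simp add: not_less)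
    then have "summable (\<lambda>j. g (Suc j))" using ab by (intro bounded_imp_summable) auto
    with ns show False by simp
  qed
  then obtain n where n: "B < (\<Sum>k\<le>n. g (Suc k))" by blast
  show "\<exists>no. \<forall>s\<ge>no. norm (Q g u s - 0) < e"
  proof (intro exI allI impI)
    fix s assume s: "Suc n \<le> s"
    have "(\<Sum>k\<le>n. g (Suc k)) \<le> (\<Sum>k<s. g (Suc k))"
      using s ab by (intro sum_mono2) auto
    also have "\<dots> = (\<Sum>j\<in>{1..s}. g j)" by (rule sum_shift1[symmetric])
    also have "\<dots> = (\<Sum>j\<in>{1..s}-u. g j) + (\<Sum>j\<in>{1..s}\<inter>u. g j)"
    proof -
      have "{1..s} - ({1..s}\<inter>u) = {1..s} - u" by blast
      then show ?thesis using sum.subset_diff[of "{1..s}\<inter>u" "{1..s}" g] by simp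
    qed
    also have "(\<Sum>j\<in>{1..s}\<inter>u. g j) \<le> (\<Sum>j\<in>{1..s}\<inter>u. 1)"
      using ab by (intro sum_mono) auto
    also have "\<dots> \<le> real (card u)" using fu by (simp add: card_mono)
    finally have sb: "B < (\<Sum>j\<in>{1..s}-u. g j) + real (card u)" using n by linarith
    have "Q g u s \<le> exp (- (\<Sum>j\<in>{1..s}-u. g j))"
      unfolding Q_def by (rule expb) (use ab in auto)
    also have "\<dots> < exp (- B + real (card u))" using sb by simp
    also have "\<dots> = e" using e by (simp add: B_def)
    finally have "Q g u s < e" .
    moreover have "0 \<le> Q g u s" using Q01[of g, OF ab] by blast
    ultimately show "norm (Q g u s - 0) < e" by simp
  qed
qed



definition T :: "(nat \<Rightarrow> real) \<Rightarrow> nat \<Rightarrow> real" where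
  "T g r = suminf (\<lambda>j. g (Suc j)) - (\<Sum>i<r. g (Suc i))"

lemma T_tends:
  assumes "summable (\<lambda>j. g (Suc j))"
  shows "T g \<longlonglongrightarrow> 0"
proof -
  have "(\<lambda>r. suminf (\<lambda>j. g (Suc j)) - (\<Sum>i<r. g (Suc i))) \<longlonglongrightarrow> suminf (\<lambda>j. g (Suc j)) - suminf (\<lambda>j. g (Suc j))"
    by (intro tendsto_diff tendsto_const summable_LIMSEQ assms)
  then show ?thesis by (simp add: T_def[abs_def])
qed

lemma Q_tail_lower:
  assumes ab: "\<And>j. 1 \<le> j \<Longrightarrow> 0 \<le> g j \<and> g j \<le> 1"
    and sm: "summable (\<lambda>j. g (Suc j))"
  shows "1 - T g r \<le> Q g {1..r} s"
proof -
  let ?m = "max r s"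
  have e: "{1..s} - {1..r} = {1..?m} - {1..r}" by auto
  have "(\<Sum>j\<in>{1..s} - {1..r}. g j) = (\<Sum>j\<in>{1..?m}. g j) - (\<Sum>j\<in>{1..r}. g j)"
    unfolding e by (rule sum_diff) auto
  also have "\<dots> = (\<Sum>i<?m. g (Suc i)) - (\<Sum>i<r. g (Suc i))" by (simp only: sum_shift1)
  also have "(\<Sum>i<?m. g (Suc i)) \<le> suminf (\<lambda>j. g (Suc j))"
    using ab by (intro sum_le_suminf sm) auto
  finally have "(\<Sum>j\<in>{1..s} - {1..r}. g j) \<le> T g r" by (simp add: T_def)
  moreover have "1 - (\<Sum>j\<in>{1..s} - {1..r}. g j) \<le> Q g {1..r} s"
    unfolding Q_def by (rule weier) (use ab in auto)
  ultimately show ?thesis by linarith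
qed

lemma U_inf: "u \<in> U \<infinity> \<longleftrightarrow> finite u \<and> (\<forall>j\<in>u. 1 \<le> j)"
  by (auto simp: U_def idx_def)

lemma Delta_Q:
  assumes "finite u"
  shows "Delta ({1..s} - u) (prodw g) u = prodw g u * Q g u s"
  using Delta_prodw[of "{1..s} - u" u g] assms by (simp add: Q_def)

lemma Delta_tail_big:
  assumes "finite u" "\<forall>j\<in>u. j \<le> r"
  shows "Delta ({1..s} - {1..r}) (prodw g) u = prodw g u * Q g {1..r} s"
proof -
  have "u \<inter> ({1..s} - {1..r}) = {}" using assms(2) by auto
  then show ?thesis using Delta_prodw[of "{1..s} - {1..r}" u g] assms by (simp add: Q_def)
qed

lemma Delta_tail_small:
  assumes "finite u" "m \<in> u" "r < m" "m \<le> s"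
  shows "Delta ({1..s} - {1..r}) (prodw g) u = 0"
proof -
  have "m \<in> u \<inter> ({1..s} - {1..r})" using assms by auto
  then have "u \<inter> ({1..s} - {1..r}) \<noteq> {}" by blast
  then show ?thesis using Delta_prodw[of "{1..s} - {1..r}" u g] assms by simp
qed

lemma prodw_le_max:
  assumes ab: "\<And>j. 1 \<le> j \<Longrightarrow> 0 \<le> g j \<and> g j \<le> 1"
    and "finite u" "m \<in> u" "\<forall>j\<in>u. 1 \<le> j"
  shows "prodw g u \<le> g m"
proof -
  have "prodw g u = g m * (\<Prod>j\<in>u-{m}. g j)"
    unfolding prodw_def using assms(2,3) by (simp add: prod.remove)
  also have "\<dots> \<le> g m * 1"
    using ab assms(3,4) by (intro mult_left_mono prod_le_1) auto
  finally show ?thesis by simp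
qed

lemma prodw_nonneg:
  assumes ab: "\<And>j. 1 \<le> j \<Longrightarrow> 0 \<le> g j \<and> g j \<le> 1"
    and "\<forall>j\<in>u. 1 \<le> j"
  shows "0 \<le> prodw g u"
  unfolding prodw_def using ab assms(2) by (intro prod_nonneg) auto



lemma part1:
  assumes "u \<in> U d" "v \<in> U d" "u \<inter> v = {}"
  shows "Delta v (prodw g) u = prodw g u * (\<Prod>j\<in>v. 1 - g j)"
  using Delta_prodw[of v u g] assms by (simp add: U_def)

lemma part2:
  assumes nonneg: "\<forall>j\<in>idx d. 0 \<le> g j"
  shows "prodw g \<in> M d \<longleftrightarrow> (\<forall>j\<in>idx d. 0 \<le> g j \<and> g j \<le> 1)"
proof
  assume m: "prodw g \<in> M d"
  show "\<forall>j\<in>idx d. 0 \<le> g j \<and> g j \<le> 1"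
  proof
    fix j assume j: "j \<in> idx d"
    have "{j} \<in> U d" "{} \<in> U d" using j by (auto simp: U_def)
    then have "0 \<le> Delta {j} (prodw g) {}" using m by (auto simp: M_def)
    moreover have "Delta {j} (prodw g) {} = 1 - g j" using Delta_prodw[of "{j}" "{}" g] by (simp add: prodw_def)
    ultimately show "0 \<le> g j \<and> g j \<le> 1" using nonneg j by auto
  qed
next
  assume ab: "\<forall>j\<in>idx d. 0 \<le> g j \<and> g j \<le> 1"
  have pn: "0 \<le> prodw g u" if "u \<in> U d" for u
    using that ab unfolding prodw_def U_def by (auto intro: prod_nonneg)
  show "prodw g \<in> M d"
    unfolding M_def Wts_def
  proof (intro CollectI conjI ballI)
    fix u assume "u \<in> U d" then show "0 \<le> prodw g u" by (rule pn)
  next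
    fix v u assume v: "v \<in> U d" and u: "u \<in> U d"
    have "0 \<le> prodw g u * (\<Prod>j\<in>v. 1 - g j)"
      using pn[OF u] v ab unfolding U_def by (auto intro!: mult_nonneg_nonneg prod_nonneg)
    then show "0 \<le> Delta v (prodw g) u"
      using Delta_prodw[of v u g] u v by (simp add: U_def)
  qed
qed

lemma partN:
  assumes ab: "\<And>j. 1 \<le> j \<Longrightarrow> 0 \<le> g j \<and> g j \<le> 1"
    and m: "prodw g \<in> M \<infinity>"
  shows "prodw g \<in> N \<infinity> \<longleftrightarrow> g \<longlonglongrightarrow> 0"
proof
  assume "prodw g \<in> N \<infinity>"
  then have h: "\<forall>e>0. \<exists>K. \<forall>u\<in>U \<infinity>. K \<le> maxu u \<longrightarrow> \<bar>prodw g u\<bar> < e" by (simp add: N_def)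
  show "g \<longlonglongrightarrow> 0"
  proof (rule LIMSEQ_I)
    fix e :: real assume "0 < e"
    then obtain K where K: "\<forall>u\<in>U \<infinity>. K \<le> maxu u \<longrightarrow> \<bar>prodw g u\<bar> < e" using h by blast
    show "\<exists>no. \<forall>n\<ge>no. norm (g n - 0) < e"
    proof (intro exI allI impI)
      fix n assume n: "max K 1 \<le> n"
      have "{n} \<in> U \<infinity>" using n by (simp add: U_inf)
      moreover have "K \<le> maxu {n}" using n by (simp add: maxu_def)
      ultimately have "\<bar>prodw g {n}\<bar> < e" using K by blast
      then show "norm (g n - 0) < e" by (simp add: prodw_def)
    qed
  qed
next
  assume g0: "g \<longlonglongrightarrow> 0"
  have "\<forall>e>0. \<exists>K. \<forall>u\<in>U \<infinity>. K \<le> maxu u \<longrightarrow> \<bar>prodw g u\<bar> < e"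
  proof (intro allI impI)
    fix e :: real assume "0 < e"
    then obtain K0 where K0: "\<forall>n\<ge>K0. norm (g n - 0) < e" using g0 LIMSEQ_D by blast
    show "\<exists>K. \<forall>u\<in>U \<infinity>. K \<le> maxu u \<longrightarrow> \<bar>prodw g u\<bar> < e"
    proof (intro exI ballI impI)
      fix u assume u: "u \<in> U \<infinity>" and k: "max K0 1 \<le> maxu u"
      then have ne: "u \<noteq> {}" by (auto simp: maxu_def)
      have fu: "finite u" and u1: "\<forall>j\<in>u. 1 \<le> j" using u by (auto simp: U_inf)
      define m where "m = Max u"
      have mu: "m \<in> u" using ne fu by (simp add: m_def)
      have mK: "K0 \<le> m" using k ne by (simp add: maxu_def m_def)
      have "prodw g u \<le> g m" by (rule prodw_le_max[OF ab fu mu u1])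
      moreover have "0 \<le> prodw g u" by (rule prodw_nonneg[OF ab u1])
      moreover have "g m < e" using K0 mK by auto
      ultimately show "\<bar>prodw g u\<bar> < e" by simp
    qed
  qed
  then show "prodw g \<in> N \<infinity>" using m by (simp add: N_def)
qed



lemma partT:
  assumes ab: "\<And>j. 1 \<le> j \<Longrightarrow> 0 \<le> g j \<and> g j \<le> 1" and C: "0 < C"
  shows "(\<forall>u\<in>U \<infinity>. Tdown C (prodw g) u = 0) \<longleftrightarrow> \<not> summable (\<lambda>j. g (Suc j))"
proof
  assume ns: "\<not> summable (\<lambda>j. g (Suc j))"
  show "\<forall>u\<in>U \<infinity>. Tdown C (prodw g) u = 0"
  proof
    fix u assume "u \<in> U \<infinity>"
    then have fu: "finite u" by (simp add: U_inf)
    have "(\<lambda>s. prodw g u * Q g u s) \<longlonglongrightarrow> prodw g u * 0"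
      by (intro tendsto_mult_left Q_zero[OF ab ns fu])
    moreover have "(\<lambda>s. Delta ({1..s} - u) (prodw g) u) = (\<lambda>s. prodw g u * Q g u s)"
      by (rule ext, rule Delta_Q[OF fu])
    ultimately have "lim (\<lambda>s. Delta ({1..s} - u) (prodw g) u) = 0"
      by (simp add: limI)
    then show "Tdown C (prodw g) u = 0" by (simp add: Tdown_def)
  qed
next
  assume all0: "\<forall>u\<in>U \<infinity>. Tdown C (prodw g) u = 0"
  show "\<not> summable (\<lambda>j. g (Suc j))"
  proof
    assume sm: "summable (\<lambda>j. g (Suc j))"
    obtain r where r: "norm (T g r - 0) < 1/2"
      using LIMSEQ_D[OF T_tends[OF sm], of "1/2"] by auto
    define u where "u = {j\<in>{1..r}. g j = 1}"
    have fu: "finite u" and u1: "\<forall>j\<in>u. 1 \<le> j" by (auto simp: u_def)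
    then have uU: "u \<in> U \<infinity>" by (simp add: U_inf)
    have pu: "prodw g u = 1" unfolding prodw_def by (rule prod.neutral) (simp add: u_def)
    define c where "c = (\<Prod>j\<in>{1..r}-u. 1 - g j)"
    have cpos: "0 < c" unfolding c_def
    proof (rule prod_pos)
      fix j assume "j \<in> {1..r} - u"
      then have "1 \<le> j" "g j \<noteq> 1" by (auto simp: u_def)
      then show "0 < 1 - g j" using ab[of j] by auto
    qed
    have lb: "c / 2 \<le> Q g u s" if s: "r \<le> s" for s
    proof -
      have e: "{1..s} - u = ({1..r} - u) \<union> ({1..s} - {1..r})" using s by (auto simp: u_def)
      have "Q g u s = c * Q g {1..r} s"
        unfolding Q_def c_def e by (rule prod.union_disjoint) auto
      moreover have "1/2 \<le> Q g {1..r} s" using Q_tail_lower[of g r s, OF ab sm] r by simp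
      ultimately show ?thesis using cpos by simp
    qed
    have "c / 2 \<le> lim (Q g u)"
      using Q_conv[of g u, OF ab] lb by (intro LIMSEQ_le_const[of "Q g u"]) auto
    then have lpos: "0 < lim (Q g u)" using cpos by simp
    have "(\<lambda>s. Delta ({1..s} - u) (prodw g) u) = (\<lambda>s. prodw g u * Q g u s)"
      by (rule ext, rule Delta_Q[OF fu])
    then have "lim (\<lambda>s. Delta ({1..s} - u) (prodw g) u) = lim (Q g u)"
      by (simp add: pu)
    then have "Tdown C (prodw g) u \<noteq> 0" using lpos C by (simp add: Tdown_def)
    then show False using all0 uU by blast
  qed
qed



lemma partA:
  assumes ab: "\<And>j. 1 \<le> j \<Longrightarrow> 0 \<le> g j \<and> g j \<le> 1" and m: "prodw g \<in> M \<infinity>"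
  shows "prodw g \<in> A \<infinity> \<longleftrightarrow> summable (\<lambda>j. g (Suc j))"
proof
  assume a: "prodw g \<in> A \<infinity>"
  show "summable (\<lambda>j. g (Suc j))"
  proof (rule ccontr)
    assume ns: "\<not> summable (\<lambda>j. g (Suc j))"
    have "{} \<in> U \<infinity>" by (simp add: U_inf)
    then have t: "(\<lambda>r. lim (\<lambda>s. Delta ({1..s} - {1..r}) (prodw g) {})) \<longlonglongrightarrow> prodw g {}"
      using a by (simp add: A_def)
    have "lim (\<lambda>s. Delta ({1..s} - {1..r}) (prodw g) {}) = 0" for r
    proof -
      have "(\<lambda>s. Delta ({1..s} - {1..r}) (prodw g) {}) = Q g {1..r}"
        using Delta_tail_big[of "{}" r _ g] by (simp add: prodw_def fun_eq_iff)
      then show ?thesis using Q_zero[OF ab ns, of "{1..r}"] by (simp add: limI)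
    qed
    then have "(\<lambda>r. 0) \<longlonglongrightarrow> (1::real)" using t by (simp add: prodw_def)
    then show False using LIMSEQ_unique[OF _ tendsto_const[of "0::real"]] by force
  qed
next
  assume sm: "summable (\<lambda>j. g (Suc j))"
  have "\<forall>u\<in>U \<infinity>. (\<forall>r. convergent (\<lambda>s. Delta ({1..s} - {1..r}) (prodw g) u)) \<and>
         (\<lambda>r. lim (\<lambda>s. Delta ({1..s} - {1..r}) (prodw g) u)) \<longlonglongrightarrow> prodw g u"
  proof
    fix u assume uU: "u \<in> U \<infinity>"
    then have fu: "finite u" and u1: "\<forall>j\<in>u. 1 \<le> j" by (auto simp: U_inf)
    define mx where "mx = maxu u"
    have lem: "\<forall>j\<in>u. j \<le> mx" using fu by (auto simp: mx_def maxu_def)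
    have pn: "0 \<le> prodw g u" by (rule prodw_nonneg[OF ab u1])
    have big: "(\<lambda>s. Delta ({1..s} - {1..r}) (prodw g) u) \<longlonglongrightarrow> prodw g u * lim (Q g {1..r})
           \<and> 1 - T g r \<le> lim (Q g {1..r}) \<and> lim (Q g {1..r}) \<le> 1" if r: "mx \<le> r" for r
    proof -
      have eq: "(\<lambda>s. Delta ({1..s} - {1..r}) (prodw g) u) = (\<lambda>s. prodw g u * Q g {1..r} s)"
        using Delta_tail_big[of u r _ g] fu lem r by (force simp: fun_eq_iff)
      have qc: "Q g {1..r} \<longlonglongrightarrow> lim (Q g {1..r})" by (rule Q_conv[of g, OF ab])
      have "1 - T g r \<le> lim (Q g {1..r})"
        by (rule LIMSEQ_le_const[OF qc]) (use Q_tail_lower[of g r, OF ab sm] in auto)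
      moreover have "lim (Q g {1..r}) \<le> 1"
        by (rule LIMSEQ_le_const2[OF qc]) (use Q01[of g, OF ab] in auto)
      ultimately show ?thesis unfolding eq using qc by (auto intro: tendsto_mult_left)
    qed
    have conv: "convergent (\<lambda>s. Delta ({1..s} - {1..r}) (prodw g) u)" for r
    proof (cases "mx \<le> r")
      case True then show ?thesis using big[OF True] by (auto simp: convergent_def)
    next
      case False
      then have ne: "u \<noteq> {}" by (auto simp: mx_def maxu_def)
      then have mxu: "mx \<in> u" using fu by (simp add: mx_def maxu_def)
      have "eventually (\<lambda>s. Delta ({1..s} - {1..r}) (prodw g) u = 0) sequentially"
        unfolding eventually_sequentially
        using Delta_tail_small[OF fu mxu] False by (intro exI[of _ mx]) auto
      then have "(\<lambda>s. Delta ({1..s} - {1..r}) (prodw g) u) \<longlonglongrightarrow> 0" by (rule tendsto_eventually)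
      then show ?thesis by (auto simp: convergent_def)
    qed
    have lo: "eventually (\<lambda>r. prodw g u * (1 - T g r) \<le> lim (\<lambda>s. Delta ({1..s} - {1..r}) (prodw g) u)) sequentially"
      unfolding eventually_sequentially
    proof (intro exI allI impI)
      fix r assume r: "mx \<le> r"
      have "lim (\<lambda>s. Delta ({1..s} - {1..r}) (prodw g) u) = prodw g u * lim (Q g {1..r})"
        using big[OF r] by (simp add: limI)
      then show "prodw g u * (1 - T g r) \<le> lim (\<lambda>s. Delta ({1..s} - {1..r}) (prodw g) u)"
        using big[OF r] pn by (simp add: mult_left_mono)
    qed
    have hi: "eventually (\<lambda>r. lim (\<lambda>s. Delta ({1..s} - {1..r}) (prodw g) u) \<le> prodw g u) sequentially"
      unfolding eventually_sequentially
    proof (intro exI allI impI)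
      fix r assume r: "mx \<le> r"
      have "lim (\<lambda>s. Delta ({1..s} - {1..r}) (prodw g) u) = prodw g u * lim (Q g {1..r})"
        using big[OF r] by (simp add: limI)
      then show "lim (\<lambda>s. Delta ({1..s} - {1..r}) (prodw g) u) \<le> prodw g u"
        using big[OF r] pn by (simp add: mult_left_le)
    qed
    have "(\<lambda>r. prodw g u * (1 - T g r)) \<longlonglongrightarrow> prodw g u * (1 - 0)"
      by (intro tendsto_mult_left tendsto_diff tendsto_const T_tends sm)
    then have "(\<lambda>r. lim (\<lambda>s. Delta ({1..s} - {1..r}) (prodw g) u)) \<longlonglongrightarrow> prodw g u"
      using tendsto_sandwich[OF lo hi] by simp
    then show "(\<forall>r. convergent (\<lambda>s. Delta ({1..s} - {1..r}) (prodw g) u)) \<and>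
         (\<lambda>r. lim (\<lambda>s. Delta ({1..s} - {1..r}) (prodw g) u)) \<longlonglongrightarrow> prodw g u"
      using conv by blast
  qed
  then show "prodw g \<in> A \<infinity>" using m by (simp add: A_def)
qed



lemma partP:
  assumes ab: "\<And>j. 1 \<le> j \<Longrightarrow> 0 \<le> g j \<and> g j \<le> 1"
  shows "summable (\<lambda>j. g (Suc j)) \<longleftrightarrow> prodw g summable_on U \<infinity>"
proof
  assume sm: "summable (\<lambda>j. g (Suc j))"
  have pn: "0 \<le> prodw g u" if "u \<in> U \<infinity>" for u
    using that by (intro prodw_nonneg[OF ab]) (auto simp: U_inf)
  have bd: "sum (prodw g) F \<le> exp (suminf (\<lambda>j. g (Suc j)))" if F: "F \<subseteq> U \<infinity>" "finite F" for F
  proof -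
    define n where "n = Max (insert 0 (\<Union>F))"
    have fin: "finite (\<Union>F)" using F by (intro finite_Union) (auto simp: U_inf)
    have sub: "F \<subseteq> Pow {1..n}"
    proof
      fix u assume u: "u \<in> F"
      then have "\<forall>j\<in>u. 1 \<le> j" using F by (auto simp: U_inf)
      moreover have "\<forall>j\<in>u. j \<le> n" using u fin unfolding n_def by (intro ballI Max_ge) auto
      ultimately show "u \<in> Pow {1..n}" by auto
    qed
    have "sum (prodw g) F \<le> sum (prodw g) (Pow {1..n})"
    proof (rule sum_mono2)
      show "\<And>b. b \<in> Pow {1..n} - F \<Longrightarrow> 0 \<le> prodw g b"
        by (rule pn) (auto simp: U_inf dest: finite_subset)
    qed (use sub in auto)
    also have "\<dots> = (\<Prod>j\<in>{1..n}. g j + 1)"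
      using prod_add[of "{1..n}" g "\<lambda>_. 1"] by (simp add: prodw_def)
    also have "\<dots> \<le> (\<Prod>j\<in>{1..n}. exp (g j))"
      using ab by (intro prod_mono) (smt (verit) atLeastAtMost_iff exp_ge_add_one_self)
    also have "\<dots> = exp (\<Sum>j\<in>{1..n}. g j)" by (simp add: exp_sum)
    also have "(\<Sum>j\<in>{1..n}. g j) = (\<Sum>i<n. g (Suc i))" by (rule sum_shift1)
    also have "\<dots> \<le> suminf (\<lambda>j. g (Suc j))"
      using ab by (intro sum_le_suminf sm) auto
    finally show ?thesis by simp
  qed
  show "prodw g summable_on U \<infinity>"
    by (rule nonneg_bdd_above_summable_on) (use pn bd in \<open>auto intro!: bdd_aboveI[where M="exp (suminf (\<lambda>j. g (Suc j)))"]\<close>)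
next
  assume su: "prodw g summable_on U \<infinity>"
  show "summable (\<lambda>j. g (Suc j))"
  proof (rule bounded_imp_summable)
    show "\<And>n. 0 \<le> g (Suc n)" using ab by simp
  next
    fix n
    have inj: "inj_on (\<lambda>j. {j}) {1..Suc n}" by (auto simp: inj_on_def)
    have "(\<Sum>k\<le>n. g (Suc k)) = (\<Sum>k<Suc n. g (Suc k))" by (simp add: lessThan_Suc_atMost)
    also have "\<dots> = (\<Sum>j\<in>{1..Suc n}. g j)" by (rule sum_shift1[symmetric])
    also have "\<dots> = sum (prodw g) ((\<lambda>j. {j}) ` {1..Suc n})"
      unfolding sum.reindex[OF inj] by (simp add: prodw_def)
    also have "\<dots> \<le> infsum (prodw g) (U \<infinity>)"
    proof (rule finite_sum_le_infsum[OF su])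
      show "(\<lambda>j. {j}) ` {1..Suc n} \<subseteq> U \<infinity>" by (auto simp: U_inf)
      show "\<And>x. x \<in> U \<infinity> - (\<lambda>j. {j}) ` {1..Suc n} \<Longrightarrow> 0 \<le> prodw g x"
        by (rule prodw_nonneg[OF ab]) (auto simp: U_inf)
    qed simp
    finally show "(\<Sum>k\<le>n. g (Suc k)) \<le> infsum (prodw g) (U \<infinity>)" .
  qed
qed


theorem mainTheorem6:
  fixes d :: enat and g :: "nat \<Rightarrow> real"
  assumes nonneg: "\<forall>j\<in>idx d. 0 \<le> g j"
    and noninc: "\<forall>i\<in>idx d. \<forall>j\<in>idx d. i \<le> j \<longrightarrow> g j \<le> g i"
  shows "(\<forall>u\<in>U d. \<forall>v\<in>U d. u \<inter> v = {} \<longrightarrow>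
            Delta v (prodw g) u = prodw g u * (\<Prod>j\<in>v. 1 - g j))
    \<and> (prodw g \<in> M d \<longleftrightarrow> (\<forall>j\<in>idx d. 0 \<le> g j \<and> g j \<le> 1))
    \<and> (d = \<infinity> \<and> prodw g \<in> M d \<longrightarrow>
         (prodw g \<in> N d \<longleftrightarrow> g \<longlonglongrightarrow> 0)
       \<and> (\<forall>C>0. (\<forall>u\<in>U d. Tdown C (prodw g) u = 0) \<longleftrightarrow> \<not> summable (\<lambda>j. g (Suc j)))
       \<and> (prodw g \<in> A d \<longleftrightarrow> summable (\<lambda>j. g (Suc j)))
       \<and> (summable (\<lambda>j. g (Suc j)) \<longleftrightarrow> prodw g \<in> P d))"
proof (intro conjI impI)
  show "\<forall>u\<in>U d. \<forall>v\<in>U d. u \<inter> v = {} \<longrightarrow>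
            Delta v (prodw g) u = prodw g u * (\<Prod>j\<in>v. 1 - g j)"
    using part1 by blast
  show m2: "prodw g \<in> M d \<longleftrightarrow> (\<forall>j\<in>idx d. 0 \<le> g j \<and> g j \<le> 1)"
    by (rule part2[OF nonneg])
  assume h: "d = \<infinity> \<and> prodw g \<in> M d"
  then have dinf: "d = \<infinity>" and m: "prodw g \<in> M \<infinity>" by auto
  have ab: "\<And>j. 1 \<le> j \<Longrightarrow> 0 \<le> g j \<and> g j \<le> 1"
    using h m2 by (auto simp: idx_def)
  show "prodw g \<in> N d \<longleftrightarrow> g \<longlonglongrightarrow> 0" using partN[OF ab m] dinf by simp
  show "\<forall>C>0. (\<forall>u\<in>U d. Tdown C (prodw g) u = 0) \<longleftrightarrow> \<not> summable (\<lambda>j. g (Suc j))"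
    using partT[OF ab] dinf by simp
  show "prodw g \<in> A d \<longleftrightarrow> summable (\<lambda>j. g (Suc j))" using partA[OF ab m] dinf by simp
  show "summable (\<lambda>j. g (Suc j)) \<longleftrightarrow> prodw g \<in> P d"
    using partP[OF ab] dinf m by (simp add: P_def)
qed

end
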